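(* Fix $\varepsilon\in(0,1)$ and $n\ge2$. Suppose $\boldsymbol{X}\sim P(n,\tau,\mu_{\mathrm{L}},\mu_{\mathrm{R}})$ for some $\tau\in\mathbb{Z}^+$ and $\mu_{\mathrm{L}},\mu_{\mathrm{R}}\in\mathbb{R}$, and let $\eta=\tau/n$. (a) If $\mu_{\mathrm{L}}=\mu_{\mathrm{R}}$, then $\mathbb{P}\{\|\mathcal{C}(\boldsymbol{X})\|_\infty>\sqrt{2\log(n/\varepsilon)}\}\le\varepsilon$. (b) If $|\mu_{\mathrm{L}}-\mu_{\mathrm{R}}|\sqrt{\eta(1-\eta)}>\sqrt{8\log(n/\varepsilon)/n}$, then $\mathbb{P}\{\|\mathcal{C}(\boldsymbol{X})\|_\infty\le\sqrt{2\log(n/\varepsilon)}\}\le\varepsilon$.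
   Context: $P(n,\tau,\mu_{\mathrm{L}},\mu_{\mathrm{R}})$ denotes the law of $\boldsymbol{X}\sim N_n(\boldsymbol{\mu},I_n)$ with $\mu_i=\mu_{\mathrm{L}}\mathbb{1}\{i\le\tau\}+\mu_{\mathrm{R}}\mathbb{1}\{i>\tau\}$, $i\in[n]$. For $i\in[n-1]$ let $\boldsymbol{v}_i=\bigl(\sqrt{\tfrac{n-i}{in}}\boldsymbol{1}_i^\top,\,-\sqrt{\tfrac{i}{(n-i)n}}\boldsymbol{1}_{n-i}^\top\bigr)^\top$ and $\mathcal{C}(\boldsymbol{x})=(\boldsymbol{v}_1^\top\boldsymbol{x},\ldots,\boldsymbol{v}_{n-1}^\top\boldsymbol{x})^\top$ (the CUSUM transformation). *)

theory Defs
  imports "HOL-Probability.Probability"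
begin

definition cp_mean :: "nat \<Rightarrow> real \<Rightarrow> real \<Rightarrow> nat \<Rightarrow> real" where
  "cp_mean \<tau> \<mu>L \<mu>R i = (if i \<le> \<tau> then \<mu>L else \<mu>R)"

text \<open>The law P(n,tau,muL,muR) of X ~ N_n(mu, I_n): product of independent N(mu_i,1), coordinates 1..n.\<close>
definition cp_law :: "nat \<Rightarrow> nat \<Rightarrow> real \<Rightarrow> real \<Rightarrow> (nat \<Rightarrow> real) measure" where
  "cp_law n \<tau> \<mu>L \<mu>R =
     (\<Pi>\<^sub>M i\<in>{1..n}. density lborel (normal_density (cp_mean \<tau> \<mu>L \<mu>R i) 1))"

definition cusum_v :: "nat \<Rightarrow> nat \<Rightarrow> nat \<Rightarrow> real" where
  "cusum_v n i j = (if j \<le> i then sqrt ((real n - real i) / (real i * real n))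
                    else - sqrt (real i / ((real n - real i) * real n)))"

definition cusum :: "nat \<Rightarrow> (nat \<Rightarrow> real) \<Rightarrow> nat \<Rightarrow> real" where
  "cusum n x i = (\<Sum>j\<in>{1..n}. cusum_v n i j * x j)"

definition cusum_supnorm :: "nat \<Rightarrow> (nat \<Rightarrow> real) \<Rightarrow> real" where
  "cusum_supnorm n x = Max ((\<lambda>i. \<bar>cusum n x i\<bar>) ` {1..n-1})"

end

theory Submission
  imports Defs "HOL-Real_Asymp.Real_Asymp"
begin


lemma std_tail_int:
  fixes t :: real assumes t: "0 < t"
  shows "(\<integral>\<^sup>+z. ennreal (std_normal_density z) * indicator {t..} z \<partial>lborel) \<le> ennreal (std_normal_density t / t)"
proof -
  have "(\<integral>\<^sup>+z. ennreal (std_normal_density z) * indicator {t..} z \<partial>lborel)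
     \<le> (\<integral>\<^sup>+z. ennreal (z / t * std_normal_density z) * indicator {t..} z \<partial>lborel)"
  proof (intro nn_integral_mono)
    fix z :: real
    show "ennreal (std_normal_density z) * indicator {t..} z \<le> ennreal (z / t * std_normal_density z) * indicator {t..} z"
    proof (cases "t \<le> z")
      case True
      then have "1 \<le> z / t" using t by simp
      then have "std_normal_density z \<le> z / t * std_normal_density z"
        using normal_density_nonneg[of 0 1 z] by (metis mult_le_cancel_right1 mult.commute mult_right_mono mult_1_left)
      then show ?thesis using True by (simp add: indicator_def ennreal_leI)
    qed (simp add: indicator_def)
  qed
  also have "\<dots> = ennreal (0 - (- std_normal_density t / t))"
  proof (rule nn_integral_FTC_atLeast[where F="\<lambda>z. - std_normal_density z / t"])
    show "(\<lambda>z. z / t * std_normal_density z) \<in> borel_measurable borel" by measurable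
    show "DERIV (\<lambda>z. - std_normal_density z / t) x :> x / t * std_normal_density x" for x
      unfolding std_normal_density_def
      apply (rule derivative_eq_intros refl | simp)+
      using t apply (simp_all add: field_simps power2_eq_square)
      done
    show "0 \<le> x / t * std_normal_density x" if "t \<le> x" for x
      using that t by simp
    show "((\<lambda>z. - std_normal_density z / t) \<longlongrightarrow> 0) at_top"
    proof -
      have "((\<lambda>z::real. exp (- z\<^sup>2 / 2)) \<longlongrightarrow> 0) at_top" by real_asymp
      then have "((\<lambda>z. - (1 / sqrt (2 * pi) * exp (- z\<^sup>2 / 2)) / t) \<longlongrightarrow> - (1 / sqrt (2 * pi) * 0) / t) at_top"
        using t by (intro tendsto_intros) auto
      then show ?thesis unfolding std_normal_density_def by simp
    qed
  qed
  also have "\<dots> = ennreal (std_normal_density t / t)" by simp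
  finally show ?thesis .
qed

lemma (in prob_space) std_normal_tail1:
  assumes W: "distributed M lborel W std_normal_density" and t: "0 < t"
  shows "prob {x\<in>space M. t \<le> W x} \<le> std_normal_density t / t"
proof -
  have "emeasure M (W -` {t..} \<inter> space M) = (\<integral>\<^sup>+z. ennreal (std_normal_density z) * indicator {t..} z \<partial>lborel)"
    by (rule distributed_emeasure[OF W]) simp
  moreover have "W -` {t..} \<inter> space M = {x\<in>space M. t \<le> W x}" by auto
  ultimately have "emeasure M {x\<in>space M. t \<le> W x} \<le> ennreal (std_normal_density t / t)"
    using std_tail_int[OF t] by simp
  then show ?thesis
    using t by (simp add: emeasure_eq_measure ennreal_le_iff)
qed

lemma (in prob_space) normal_abs_tail:
  assumes Z: "distributed M lborel Z (normal_density c 1)" and t: "0 < t"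
  shows "prob {x\<in>space M. t < \<bar>Z x - c\<bar>} \<le> 2 * std_normal_density t / t"
proof -
  have "distributed M lborel (\<lambda>x. -c + 1 * Z x) (normal_density (-c + 1 * c) (\<bar>1\<bar> * 1))"
    by (rule normal_density_affine[OF Z]) auto
  then have W: "distributed M lborel (\<lambda>x. Z x - c) std_normal_density" by simp
  have "distributed M lborel (\<lambda>x. c + -1 * Z x) (normal_density (c + -1 * c) (\<bar>-1\<bar> * 1))"
    by (rule normal_density_affine[OF Z]) auto
  then have V: "distributed M lborel (\<lambda>x. - (Z x - c)) std_normal_density" by simp
  have Zm[measurable]: "Z \<in> borel_measurable M" using distributed_measurable[OF Z] by simp
  have ev1: "{x\<in>space M. t \<le> Z x - c} \<in> events" by measurable
  have ev2: "{x\<in>space M. t \<le> - (Z x - c)} \<in> events" by measurable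
  have "prob {x\<in>space M. t < \<bar>Z x - c\<bar>} \<le> prob ({x\<in>space M. t \<le> Z x - c} \<union> {x\<in>space M. t \<le> - (Z x - c)})"
    using ev1 ev2 by (intro finite_measure_mono) auto
  also have "\<dots> \<le> prob {x\<in>space M. t \<le> Z x - c} + prob {x\<in>space M. t \<le> - (Z x - c)}"
    by (rule measure_subadditive) (use ev1 ev2 in \<open>simp_all add: emeasure_eq_measure\<close>)
  also have "\<dots> \<le> std_normal_density t / t + std_normal_density t / t"
    using std_normal_tail1[OF W t] std_normal_tail1[OF V t] by linarith
  finally show ?thesis by simp
qed



lemma cp_prob: "prob_space (cp_law n \<tau> \<mu>L \<mu>R)"
  unfolding cp_law_def by (intro prob_space_PiM prob_space_normal_density) auto

lemma cp_comp:
  assumes j: "j \<in> {1..n}"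
  shows "distributed (cp_law n \<tau> \<mu>L \<mu>R) lborel (\<lambda>x. x j) (normal_density (cp_mean \<tau> \<mu>L \<mu>R j) 1)"
proof -
  let ?N = "\<lambda>i. density lborel (normal_density (cp_mean \<tau> \<mu>L \<mu>R i) 1)"
  have "distr (cp_law n \<tau> \<mu>L \<mu>R) lborel (\<lambda>x. x j) = distr (PiM {1..n} ?N) (?N j) (\<lambda>x. x j)"
    unfolding cp_law_def by (intro distr_cong) auto
  also have "\<dots> = ?N j"
    using j by (intro distr_PiM_component prob_space_normal_density) auto
  finally have 1: "distr (cp_law n \<tau> \<mu>L \<mu>R) lborel (\<lambda>x. x j) = density lborel (normal_density (cp_mean \<tau> \<mu>L \<mu>R j) 1)" .
  have "(\<lambda>x. x j) \<in> measurable (PiM {1..n} ?N) (?N j)"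
    using j by (rule measurable_component_singleton)
  moreover have "measurable (PiM {1..n} ?N) (?N j) = measurable (PiM {1..n} ?N) lborel"
    by (rule measurable_cong_sets) auto
  ultimately have 2: "(\<lambda>x. x j) \<in> measurable (cp_law n \<tau> \<mu>L \<mu>R) lborel"
    unfolding cp_law_def by simp
  show ?thesis
    unfolding distributed_def using 1 2 by simp
qed

lemma cp_indep:
  assumes n: "1 \<le> n"
  shows "prob_space.indep_vars (cp_law n \<tau> \<mu>L \<mu>R) (\<lambda>_. borel) (\<lambda>j x. x j) {1..n}"
proof -
  let ?N = "\<lambda>i. density lborel (normal_density (cp_mean \<tau> \<mu>L \<mu>R i) 1)"
  let ?M = "cp_law n \<tau> \<mu>L \<mu>R"
  interpret prob_space ?M by (rule cp_prob)
  have rv: "random_variable borel (\<lambda>x. x j)" if "j \<in> {1..n}" for j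
    using distributed_measurable[OF cp_comp[OF that]] by simp
  have "distr ?M (\<Pi>\<^sub>M i\<in>{1..n}. borel) (\<lambda>x. \<lambda>i\<in>{1..n}. x i) = distr ?M ?M (\<lambda>x. x)"
  proof (rule distr_cong)
    show "sets (\<Pi>\<^sub>M i\<in>{1..n}. borel) = sets ?M"
      unfolding cp_law_def by (rule sets_PiM_cong) auto
    show "restrict x {1..n} = x" if "x \<in> space ?M" for x :: "nat \<Rightarrow> real"
      using that unfolding cp_law_def space_PiM by (rule PiE_restrict)
  qed simp
  also have "\<dots> = (\<Pi>\<^sub>M i\<in>{1..n}. distr ?M borel (\<lambda>x. x i))"
  proof -
    have "(\<Pi>\<^sub>M i\<in>{1..n}. distr ?M borel (\<lambda>x. x i)) = (\<Pi>\<^sub>M i\<in>{1..n}. ?N i)"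
    proof (intro PiM_cong refl)
      fix i assume i: "i \<in> {1..n}"
      have "distr ?M borel (\<lambda>x. x i) = distr ?M lborel (\<lambda>x. x i)"
        by (intro distr_cong) auto
      also have "\<dots> = density lborel (normal_density (cp_mean \<tau> \<mu>L \<mu>R i) 1)"
        using cp_comp[OF i] unfolding distributed_def by auto
      finally show "distr ?M borel (\<lambda>x. x i) = ?N i" .
    qed
    then show ?thesis unfolding cp_law_def by simp
  qed
  finally have eq: "distr ?M (\<Pi>\<^sub>M i\<in>{1..n}. borel) (\<lambda>x. \<lambda>i\<in>{1..n}. x i) = (\<Pi>\<^sub>M i\<in>{1..n}. distr ?M borel (\<lambda>x. x i))" .
  show ?thesis
  proof (rule indep_vars_iff_distr_eq_PiM'[THEN iffD2])
    show "{1..n} \<noteq> {}" using n by simp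
  qed (use rv eq in auto)
qed

lemma cp_lin:
  assumes n: "1 \<le> n" and a: "\<And>j. j \<in> {1..n} \<Longrightarrow> a j \<noteq> 0"
  shows "distributed (cp_law n \<tau> \<mu>L \<mu>R) lborel (\<lambda>x. \<Sum>j\<in>{1..n}. a j * x j)
           (normal_density (\<Sum>j\<in>{1..n}. a j * cp_mean \<tau> \<mu>L \<mu>R j) (sqrt (\<Sum>j\<in>{1..n}. (a j)\<^sup>2)))"
proof -
  let ?M = "cp_law n \<tau> \<mu>L \<mu>R"
  interpret prob_space ?M by (rule cp_prob)
  have d: "distributed ?M lborel (\<lambda>x. a j * x j) (normal_density (a j * cp_mean \<tau> \<mu>L \<mu>R j) \<bar>a j\<bar>)"
    if j: "j \<in> {1..n}" for j
  proof -
    have "distributed ?M lborel (\<lambda>x. 0 + a j * x j) (normal_density (0 + a j * cp_mean \<tau> \<mu>L \<mu>R j) (\<bar>a j\<bar> * 1))"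
      by (rule normal_density_affine[OF cp_comp[OF j]]) (use a[OF j] in auto)
    then show ?thesis by simp
  qed
  have ind: "indep_vars (\<lambda>_. borel) (\<lambda>j x. a j * x j) {1..n}"
    using indep_vars_compose2[OF cp_indep[OF n], of "\<lambda>j z. a j * z" "\<lambda>_. borel"] by simp
  have "distributed ?M lborel (\<lambda>x. \<Sum>j\<in>{1..n}. a j * x j)
      (normal_density (\<Sum>j\<in>{1..n}. a j * cp_mean \<tau> \<mu>L \<mu>R j) (sqrt (\<Sum>j\<in>{1..n}. \<bar>a j\<bar>\<^sup>2)))"
    by (rule sum_indep_normal[OF _ _ ind]) (use n a d in auto)
  then show ?thesis by simp
qed



lemma sum_if_split:
  fixes A B :: real assumes "i \<le> n"
  shows "(\<Sum>j\<in>{1..n}. if j \<le> i then A else B) = real i * A + (real n - real i) * B"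
proof -
  have "(\<Sum>j\<in>{1..n}. if j \<le> i then A else B) = (\<Sum>j\<in>{1..n} \<inter> {j. j \<le> i}. A) + (\<Sum>j\<in>{1..n} \<inter> - {j. j \<le> i}. B)"
    by (rule sum.If_cases) simp
  also have "{1..n} \<inter> {j. j \<le> i} = {1..i}" using assms by auto
  also have "{1..n} \<inter> - {j. j \<le> i} = {i<..n}" using assms by auto
  finally show ?thesis using assms by (simp add: of_nat_diff)
qed

lemma sqrt_id1:
  fixes i n :: real assumes "0 < i" "i < n"
  shows "i * sqrt ((n - i) / (i * n)) = sqrt (i * (n - i) / n)"
proof -
  have "i * sqrt ((n - i) / (i * n)) = sqrt (i\<^sup>2) * sqrt ((n - i) / (i * n))" using assms by simp
  also have "\<dots> = sqrt (i\<^sup>2 * ((n - i) / (i * n)))" by (rule real_sqrt_mult[symmetric])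
  also have "i\<^sup>2 * ((n - i) / (i * n)) = i * (n - i) / n" using assms by (simp add: power2_eq_square field_simps)
  finally show ?thesis .
qed

lemma sqrt_id2:
  fixes i n :: real assumes "0 < i" "i < n"
  shows "(n - i) * sqrt (i / ((n - i) * n)) = sqrt (i * (n - i) / n)"
proof -
  have "(n - i) * sqrt (i / ((n - i) * n)) = sqrt ((n - i)\<^sup>2) * sqrt (i / ((n - i) * n))" using assms by simp
  also have "\<dots> = sqrt ((n - i)\<^sup>2 * (i / ((n - i) * n)))" by (rule real_sqrt_mult[symmetric])
  also have "(n - i)\<^sup>2 * (i / ((n - i) * n)) = i * (n - i) / n" using assms by (simp add: power2_eq_square field_simps)
  finally show ?thesis .
qed

lemma cusum_v_nz:
  assumes "1 \<le> i" "i < n" shows "cusum_v n i j \<noteq> 0"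
  using assms by (auto simp: cusum_v_def)

lemma cusum_v_sq:
  assumes "1 \<le> i" "i < n" shows "(\<Sum>j\<in>{1..n}. (cusum_v n i j)\<^sup>2) = 1"
proof -
  have "(\<Sum>j\<in>{1..n}. (cusum_v n i j)\<^sup>2) = (\<Sum>j\<in>{1..n}. if j \<le> i then (real n - real i) / (real i * real n) else real i / ((real n - real i) * real n))"
    using assms by (intro sum.cong) (auto simp: cusum_v_def)
  also have "\<dots> = real i * ((real n - real i) / (real i * real n)) + (real n - real i) * (real i / ((real n - real i) * real n))"
    using assms by (intro sum_if_split) auto
  also have "\<dots> = 1" using assms by (simp add: field_simps)
  finally show ?thesis .
qed

lemma cusum_v_mean:
  assumes "1 \<le> i" "i < n"
  shows "(\<Sum>j\<in>{1..n}. cusum_v n i j * cp_mean i \<mu>L \<mu>R j) = sqrt (real i * (real n - real i) / real n) * (\<mu>L - \<mu>R)"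
proof -
  have "(\<Sum>j\<in>{1..n}. cusum_v n i j * cp_mean i \<mu>L \<mu>R j) = (\<Sum>j\<in>{1..n}. if j \<le> i then sqrt ((real n - real i) / (real i * real n)) * \<mu>L else - sqrt (real i / ((real n - real i) * real n)) * \<mu>R)"
    by (intro sum.cong) (auto simp: cusum_v_def cp_mean_def)
  also have "\<dots> = real i * (sqrt ((real n - real i) / (real i * real n)) * \<mu>L) + (real n - real i) * (- sqrt (real i / ((real n - real i) * real n)) * \<mu>R)"
    using assms by (intro sum_if_split) auto
  also have "\<dots> = (real i * sqrt ((real n - real i) / (real i * real n))) * \<mu>L - ((real n - real i) * sqrt (real i / ((real n - real i) * real n))) * \<mu>R"
    by (simp add: algebra_simps)
  also have "\<dots> = sqrt (real i * (real n - real i) / real n) * (\<mu>L - \<mu>R)"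
    using sqrt_id1[of "real i" "real n"] sqrt_id2[of "real i" "real n"] assms
    by (simp add: algebra_simps)
  finally show ?thesis .
qed

lemma cusum_v_null:
  assumes "1 \<le> i" "i < n"
  shows "(\<Sum>j\<in>{1..n}. cusum_v n i j * cp_mean \<tau> \<mu> \<mu> j) = 0"
proof -
  have "(\<Sum>j\<in>{1..n}. cusum_v n i j * cp_mean \<tau> \<mu> \<mu> j) = (\<Sum>j\<in>{1..n}. cusum_v n i j * cp_mean i \<mu> \<mu> j)"
    by (simp add: cp_mean_def)
  also have "\<dots> = 0" using cusum_v_mean[OF assms, of \<mu> \<mu>] by simp
  finally show ?thesis .
qed


lemma ln2_ge_half: "1 / 2 \<le> ln (2::real)"
  using ln_diff_le[of 1 2] by simp

theorem lemma4p1: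
  fixes \<epsilon> \<mu>L \<mu>R :: real and n \<tau> :: nat
  assumes "0 < \<epsilon>" and "\<epsilon> < 1" and "2 \<le> n" and "1 \<le> \<tau>"
  defines "\<eta> \<equiv> real \<tau> / real n"
  shows "(\<mu>L = \<mu>R \<longrightarrow>
            measure (cp_law n \<tau> \<mu>L \<mu>R)
              {x \<in> space (cp_law n \<tau> \<mu>L \<mu>R). cusum_supnorm n x > sqrt (2 * ln (real n / \<epsilon>))} \<le> \<epsilon>)
       \<and> (\<bar>\<mu>L - \<mu>R\<bar> * sqrt (\<eta> * (1 - \<eta>)) > sqrt (8 * ln (real n / \<epsilon>) / real n) \<longrightarrow>
            measure (cp_law n \<tau> \<mu>L \<mu>R)
              {x \<in> space (cp_law n \<tau> \<mu>L \<mu>R). cusum_supnorm n x \<le> sqrt (2 * ln (real n / \<epsilon>))} \<le> \<epsilon>)"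
proof -
  let ?M = "cp_law n \<tau> \<mu>L \<mu>R"
  interpret prob_space ?M by (rule cp_prob)
  define L where "L = ln (real n / \<epsilon>)"
  define t where "t = sqrt (2 * L)"
  have n2: "2 \<le> real n" using assms(3) by simp
  have "2 \<le> real n / \<epsilon>" using assms(1,2) n2 by (simp add: field_simps)
  then have "ln 2 \<le> L" unfolding L_def by (subst ln_le_cancel_iff) auto
  then have L: "1 / 2 \<le> L" using ln2_ge_half by linarith
  have t: "0 < t" unfolding t_def using L by simp
  have t2: "t\<^sup>2 = 2 * L" unfolding t_def using L by simp
  have expL: "exp (- L) = \<epsilon> / real n"
    unfolding L_def using assms(1) n2 by (simp add: exp_minus exp_ln)
  have phi: "std_normal_density t = 1 / sqrt (2 * pi) * (\<epsilon> / real n)"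
    unfolding std_normal_density_def t2 using expL by simp
  have "2 \<le> sqrt (2 * pi) * t"
  proof -
    have "3 * (1 / 2) \<le> pi * L" using L pi_gt3 by (intro mult_mono) auto
    then have "4 \<le> 2 * pi * (2 * L)" by simp
    then have "sqrt 4 \<le> sqrt (2 * pi * (2 * L))" by (rule real_sqrt_le_mono)
    also have "sqrt (2 * pi * (2 * L)) = sqrt (2 * pi) * t" unfolding t_def by (simp add: real_sqrt_mult)
    finally show ?thesis by simp
  qed
  then have tail: "2 * std_normal_density t / t \<le> \<epsilon> / real n"
    unfolding phi using t assms(1) n2 by (simp add: field_simps)
  have en: "\<epsilon> / real n \<le> \<epsilon>" using assms(1) n2 by (simp add: field_simps)
  have distr_i: "distributed ?M lborel (\<lambda>x. cusum n x i)
      (normal_density (\<Sum>j\<in>{1..n}. cusum_v n i j * cp_mean \<tau> \<mu>L \<mu>R j) 1)"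
    if i: "1 \<le> i" "i < n" for i
    using cp_lin[of n "cusum_v n i" \<tau> \<mu>L \<mu>R] cusum_v_nz[OF i] cusum_v_sq[OF i] i
    unfolding cusum_def by simp
  have meas: "(\<lambda>x. cusum n x i) \<in> borel_measurable ?M" if i: "1 \<le> i" "i < n" for i
    using distributed_measurable[OF distr_i[OF i]] by simp
  have fin: "finite {1..n-1}" "{1..n-1} \<noteq> {}" using assms(3) by auto
  show ?thesis
  proof (intro conjI impI)
    assume eq: "\<mu>L = \<mu>R"
    have tl: "prob {x\<in>space ?M. t < \<bar>cusum n x i\<bar>} \<le> \<epsilon> / real n" if i: "i \<in> {1..n-1}" for i
    proof -
      have i': "1 \<le> i" "i < n" using i assms(3) by auto
      have "distributed ?M lborel (\<lambda>x. cusum n x i) (normal_density 0 1)"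
        using distr_i[OF i'] cusum_v_null[OF i', of \<tau> \<mu>R] eq by simp
      from normal_abs_tail[OF this t] tail show ?thesis by simp
    qed
    have ev: "{x\<in>space ?M. t < \<bar>cusum n x i\<bar>} \<in> events" if i: "i \<in> {1..n-1}" for i
    proof -
      have i': "1 \<le> i" "i < n" using i assms(3) by auto
      have [measurable]: "(\<lambda>x. cusum n x i) \<in> borel_measurable ?M" by (rule meas[OF i'])
      show ?thesis by measurable
    qed
    have "{x \<in> space ?M. cusum_supnorm n x > sqrt (2 * ln (real n / \<epsilon>))}
        \<subseteq> (\<Union>i\<in>{1..n-1}. {x\<in>space ?M. t < \<bar>cusum n x i\<bar>})"
      unfolding cusum_supnorm_def t_def[symmetric] L_def[symmetric] t_def[symmetric]
      using fin by (auto simp: Max_gr_iff)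
    then have "measure ?M {x \<in> space ?M. cusum_supnorm n x > sqrt (2 * ln (real n / \<epsilon>))}
        \<le> prob (\<Union>i\<in>{1..n-1}. {x\<in>space ?M. t < \<bar>cusum n x i\<bar>})"
      using ev by (intro finite_measure_mono) auto
    also have "\<dots> \<le> (\<Sum>i\<in>{1..n-1}. prob {x\<in>space ?M. t < \<bar>cusum n x i\<bar>})"
      using ev by (intro finite_measure_subadditive_finite) auto
    also have "\<dots> \<le> (\<Sum>i\<in>{1..n-1}. \<epsilon> / real n)"
      using tl by (intro sum_mono) auto
    also have "\<dots> = real (n - 1) * (\<epsilon> / real n)" by simp
    also have "\<dots> \<le> \<epsilon>" using assms(1,3) n2 by (simp add: field_simps of_nat_diff)
    finally show "measure ?M {x \<in> space ?M. cusum_supnorm n x > sqrt (2 * ln (real n / \<epsilon>))} \<le> \<epsilon>" .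
  next
    assume H: "\<bar>\<mu>L - \<mu>R\<bar> * sqrt (\<eta> * (1 - \<eta>)) > sqrt (8 * ln (real n / \<epsilon>) / real n)"
    have pos: "0 < sqrt (8 * ln (real n / \<epsilon>) / real n)"
      using L n2 unfolding L_def by simp
    have tn: "\<tau> < n"
    proof (rule ccontr)
      assume "\<not> \<tau> < n"
      then have "1 \<le> \<eta>" unfolding \<eta>_def using n2 by simp
      then have "\<eta> * (1 - \<eta>) \<le> 0" by (simp add: mult_nonneg_nonpos)
      then have "sqrt (\<eta> * (1 - \<eta>)) \<le> 0" by simp
      then have "\<bar>\<mu>L - \<mu>R\<bar> * sqrt (\<eta> * (1 - \<eta>)) \<le> 0" by (simp add: mult_nonneg_nonpos)
      then show False using H pos by linarith
    qed
    have i': "1 \<le> \<tau>" "\<tau> < n" using assms(4) tn by auto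
    define c where "c = sqrt (real \<tau> * (real n - real \<tau>) / real n) * (\<mu>L - \<mu>R)"
    have dY: "distributed ?M lborel (\<lambda>x. cusum n x \<tau>) (normal_density c 1)"
      using distr_i[OF i'] cusum_v_mean[OF i', of \<mu>L \<mu>R] unfolding c_def by simp
    have c: "2 * t < \<bar>c\<bar>"
    proof -
      have s1: "sqrt (real \<tau> * (real n - real \<tau>) / real n) = sqrt (real n) * sqrt (\<eta> * (1 - \<eta>))"
        unfolding \<eta>_def real_sqrt_mult[symmetric] using n2 by (simp add: field_simps)
      have s2: "sqrt (real n) * sqrt (8 * ln (real n / \<epsilon>) / real n) = 2 * t"
      proof -
        have "sqrt (real n) * sqrt (8 * ln (real n / \<epsilon>) / real n) = sqrt (4 * (2 * L))"
          unfolding L_def real_sqrt_mult[symmetric] using n2 by simp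
        also have "\<dots> = 2 * t" unfolding t_def real_sqrt_mult by simp
        finally show ?thesis .
      qed
      have "sqrt (real n) * sqrt (8 * ln (real n / \<epsilon>) / real n) < sqrt (real n) * (\<bar>\<mu>L - \<mu>R\<bar> * sqrt (\<eta> * (1 - \<eta>)))"
        using H n2 by simp
      moreover have "\<bar>c\<bar> = sqrt (real n) * (\<bar>\<mu>L - \<mu>R\<bar> * sqrt (\<eta> * (1 - \<eta>)))"
      proof -
        have "\<eta> \<le> 1" "0 \<le> \<eta>" unfolding \<eta>_def using i' n2 by auto
        then have "0 \<le> \<eta> * (1 - \<eta>)" by simp
        then show ?thesis unfolding c_def s1 by (simp add: abs_mult)
      qed
      ultimately show ?thesis using s2 by simp
    qed
    have "{x \<in> space ?M. cusum_supnorm n x \<le> sqrt (2 * ln (real n / \<epsilon>))}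
        \<subseteq> {x\<in>space ?M. t < \<bar>cusum n x \<tau> - c\<bar>}"
    proof safe
      fix x assume x: "x \<in> space ?M" and le: "cusum_supnorm n x \<le> sqrt (2 * ln (real n / \<epsilon>))"
      have "\<bar>cusum n x \<tau>\<bar> \<le> cusum_supnorm n x"
        unfolding cusum_supnorm_def using fin i' by (intro Max_ge) auto
      then have "\<bar>cusum n x \<tau>\<bar> \<le> t" using le unfolding t_def L_def by simp
      then show "t < \<bar>cusum n x \<tau> - c\<bar>" using c by linarith
    qed
    then have "measure ?M {x \<in> space ?M. cusum_supnorm n x \<le> sqrt (2 * ln (real n / \<epsilon>))}
        \<le> prob {x\<in>space ?M. t < \<bar>cusum n x \<tau> - c\<bar>}"
    proof (rule finite_measure_mono)
      have [measurable]: "(\<lambda>x. cusum n x \<tau>) \<in> borel_measurable ?M" by (rule meas[OF i'])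
      show "{x\<in>space ?M. t < \<bar>cusum n x \<tau> - c\<bar>} \<in> events" by measurable
    qed
    also have "\<dots> \<le> 2 * std_normal_density t / t" by (rule normal_abs_tail[OF dY t])
    also have "\<dots> \<le> \<epsilon>" using tail en by linarith
    finally show "measure ?M {x \<in> space ?M. cusum_supnorm n x \<le> sqrt (2 * ln (real n / \<epsilon>))} \<le> \<epsilon>" .
  qed
qed

end
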